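(* Let $M,N,p,r\ge1$. If $i$ is constant, or if the multisets $\{(a_y,b_y)\}_{y=1}^p$ and $\{(a_y,b_{y+1})\}_{y=1}^p$ coincide, then $(E_x)$ holds for all $x$. The normalized number $\beta_p^r(M,N)$ of triples $(i,a,b)$ satisfying one of these two conditions (divided by $M^{p+r}N^p$) equals $$\beta_p^r(M,N)=\delta_p(M,N)+\frac{1}{M^{r-1}}\big(1-\delta_p(M,N)\big),$$ and $\beta_p^r(M,N)=d_p^r(M,N)$ whenever $M=1$, or $N=1$, or $r=1$, or $p\le3$.
   Context: For integers $M,N,p,r\ge1$, consider triples $(i,a,b)$ with $i\in\mathbb Z_M^r$, $a\in\mathbb Z_M^p$, $b\in\mathbb Z_N^p$, with cyclic conventions $i_{r+1}=i_1$, $b_{p+1}=b_1$. For $x\in\{1,\dots,r\}$, condition $(E_x)$ says that the multisets $\{(i_x+a_y,b_y),(i_{x+1}+a_y,b_{y+1}):y=1,\dots,p\}$ and $\{(i_x+a_y,b_{y+1}),(i_{x+1}+a_y,b_y):y=1,\dots,p\}$ of elements of $\mathbb Z_M\times\mathbb Z_N$ (counted with multiplicity) coincide. Define $d_p^r(M,N)=\frac{1}{M^{p+r}N^p}\#\{(i,a,b):(E_x)\text{ holds for all }x\}$ and $\delta_p(M,N)=\frac{1}{(MN)^p}\#\{(a,b)\in\mathbb Z_M^p\times\mathbb Z_N^p:\{(a_y,b_y)\}_{y=1}^p=\{(a_y,b_{y+1})\}_{y=1}^p\text{ as multisets}\}$. A tuple is constant if all its entries are equal. *)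

theory Defs
  imports Complex_Main "HOL-Library.Multiset"
begin

text \<open>Tuples in Z_m^k: functions nat => nat, entries indexed 0..k-1 with values in
  {0..<m} (representatives of Z_m), and 0 outside the index range (extensional).
  Cyclic index successor: y+1 mod k.\<close>

definition tuples :: "nat \<Rightarrow> nat \<Rightarrow> (nat \<Rightarrow> nat) set" where
  "tuples m k = {f. (\<forall>j<k. f j < m) \<and> (\<forall>j. k \<le> j \<longrightarrow> f j = 0)}"

text \<open>Condition (E_x), x in 0..r-1 (0-based), with arithmetic in Z_M x Z_N.\<close>
definition cond_E :: "nat \<Rightarrow> nat \<Rightarrow> nat \<Rightarrow> nat \<Rightarrow> (nat \<Rightarrow> nat) \<Rightarrow> (nat \<Rightarrow> nat) \<Rightarrow> (nat \<Rightarrow> nat) \<Rightarrow> nat \<Rightarrow> bool" where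
  "cond_E M N p r i a b x \<longleftrightarrow>
     image_mset (\<lambda>y. ((i x + a y) mod M, b y mod N)) (mset_set {..<p})
   + image_mset (\<lambda>y. ((i (Suc x mod r) + a y) mod M, b (Suc y mod p) mod N)) (mset_set {..<p})
   = image_mset (\<lambda>y. ((i x + a y) mod M, b (Suc y mod p) mod N)) (mset_set {..<p})
   + image_mset (\<lambda>y. ((i (Suc x mod r) + a y) mod M, b y mod N)) (mset_set {..<p})"

definition triples :: "nat \<Rightarrow> nat \<Rightarrow> nat \<Rightarrow> nat \<Rightarrow> ((nat \<Rightarrow> nat) \<times> (nat \<Rightarrow> nat) \<times> (nat \<Rightarrow> nat)) set" where
  "triples M N p r = tuples M r \<times> tuples M p \<times> tuples N p"

definition d_pr :: "nat \<Rightarrow> nat \<Rightarrow> nat \<Rightarrow> nat \<Rightarrow> real" where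
  "d_pr p r M N = real (card {(i, a, b) \<in> triples M N p r. \<forall>x<r. cond_E M N p r i a b x})
      / (real M ^ (p + r) * real N ^ p)"

definition mcond :: "nat \<Rightarrow> (nat \<Rightarrow> nat) \<Rightarrow> (nat \<Rightarrow> nat) \<Rightarrow> bool" where
  "mcond p a b \<longleftrightarrow>
     image_mset (\<lambda>y. (a y, b y)) (mset_set {..<p})
   = image_mset (\<lambda>y. (a y, b (Suc y mod p))) (mset_set {..<p})"

definition delta_p :: "nat \<Rightarrow> nat \<Rightarrow> nat \<Rightarrow> real" where
  "delta_p p M N = real (card {(a, b) \<in> tuples M p \<times> tuples N p. mcond p a b})
      / (real M * real N) ^ p"

definition const_tuple :: "nat \<Rightarrow> (nat \<Rightarrow> nat) \<Rightarrow> bool" where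
  "const_tuple r i \<longleftrightarrow> (\<forall>x<r. \<forall>x'<r. i x = i x')"

definition beta_pr :: "nat \<Rightarrow> nat \<Rightarrow> nat \<Rightarrow> nat \<Rightarrow> real" where
  "beta_pr p r M N = real (card {(i, a, b) \<in> triples M N p r. const_tuple r i \<or> mcond p a b})
      / (real M ^ (p + r) * real N ^ p)"

end

theory Submission
  imports Defs "HOL-Number_Theory.Cong"
begin


lemma tuples_card: "card (tuples m k) = m ^ k \<and> finite (tuples m k)"
proof -
  let ?L = "{xs. set xs \<subseteq> {..<m} \<and> length xs = k}"
  have b: "bij_betw (\<lambda>xs j. if j < k then xs ! j else 0) ?L (tuples m k)"
  proof (rule bij_betw_byWitness[where f'="\<lambda>f. map f [0..<k]"])
    show "\<forall>a\<in>?L. map (\<lambda>j. if j < k then a ! j else 0) [0..<k] = a"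
      by (auto intro: nth_equalityI)
    show "\<forall>a'\<in>tuples m k. (\<lambda>j. if j < k then map a' [0..<k] ! j else 0) = a'"
      by (auto simp: tuples_def fun_eq_iff)
    show "(\<lambda>xs j. if j < k then xs ! j else 0) ` ?L \<subseteq> tuples m k"
      by (auto simp: tuples_def dest!: nth_mem)
    show "(\<lambda>f. map f [0..<k]) ` tuples m k \<subseteq> ?L"
      by (auto simp: tuples_def)
  qed
  have "finite ?L" using finite_lists_length_eq[of "{..<m}" k] by simp
  then show ?thesis using bij_betw_same_card[OF b] bij_betw_finite[OF b]
    by (simp add: card_lists_length_eq)
qed

lemma abs2:
  assumes E: "{#(u0,b0),(u1,b1),(v0,b1),(v1,b0)#} = {#(u0,b1),(u1,b0),(v0,b0),(v1,b1)#}"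
    and "u0 \<noteq> v0" "u0 = u1 \<Longrightarrow> a0 = a1"
  shows "{#(a0,b0),(a1,b1)#} = {#(a0,b1),(a1,b0)#}"
proof (cases "b0 = b1")
  case False
  from arg_cong[OF E, of "\<lambda>X. image_mset fst (filter_mset (\<lambda>z. snd z = b0) X)"]
  have "{#u0, v1#} = {#u1, v0#}" using False by (simp add: add_mset_commute)
  then have "u0 = u1" using assms(2) by (auto simp: add_eq_conv_ex)
  then show ?thesis using assms by (simp add: add_mset_commute)
qed simp

lemma abs3:
  assumes E: "{#(u0,b0),(u1,b1),(u2,b2),(v0,b1),(v1,b2),(v2,b0)#} = {#(u0,b1),(u1,b2),(u2,b0),(v0,b0),(v1,b1),(v2,b2)#}"
    and n: "u0 \<noteq> v0" "u1 \<noteq> v1" "u2 \<noteq> v2"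
    and i: "u0 = u1 \<Longrightarrow> a0 = a1" "u0 = u2 \<Longrightarrow> a0 = a2" "u1 = u2 \<Longrightarrow> a1 = a2"
  shows "{#(a0,b0),(a1,b1),(a2,b2)#} = {#(a0,b1),(a1,b2),(a2,b0)#}"
proof -
  have F: "image_mset fst (filter_mset (\<lambda>z. snd z = \<beta>) {#(u0,b0),(u1,b1),(u2,b2),(v0,b1),(v1,b2),(v2,b0)#})
     = image_mset fst (filter_mset (\<lambda>z. snd z = \<beta>) {#(u0,b1),(u1,b2),(u2,b0),(v0,b0),(v1,b1),(v2,b2)#})" for \<beta>
    using E by simp
  show ?thesis
  proof (cases "b0 = b1")
    case True
    show ?thesis
    proof (cases "b2 = b0")
      case False
      from F[of b2] False True have "{#u2, v1#} = {#u1, v2#}" by (simp add: add_mset_commute)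
      then have "u1 = u2" using n by (auto simp: add_eq_conv_ex)
      then show ?thesis using i True by (simp add: add_mset_commute)
    qed (use True in \<open>simp add: add_mset_commute\<close>)
  next
    case f1: False
    show ?thesis
    proof (cases "b0 = b2")
      case True
      from F[of b1] f1 True have "{#u1, v0#} = {#u0, v1#}" by (simp add: add_mset_commute)
      then have "u1 = u0" using n by (auto simp: add_eq_conv_ex)
      then show ?thesis using i True by (simp add: add_mset_commute)
    next
      case f2: False
      from F[of b0] f1 f2 have "{#u0, v2#} = {#u2, v0#}" by (simp add: add_mset_commute)
      then have e1: "u0 = u2" using n by (auto simp: add_eq_conv_ex)
      show ?thesis
      proof (cases "b1 = b2")
        case True
        then show ?thesis using i e1 by (simp add: add_mset_commute)
      next
        case False
        from F[of b1] f1 False have "{#u1, v0#} = {#u0, v1#}" by (simp add: add_mset_commute)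
        then have "u1 = u0" using n by (auto simp: add_eq_conv_ex)
        then show ?thesis using i e1 by (simp add: add_mset_commute)
      qed
    qed
  qed
qed



lemma key:
  fixes c d M N p :: nat and a b :: "nat \<Rightarrow> nat"
  assumes cd: "c < M" "d < M" "c \<noteq> d" and ab: "\<forall>y<p. a y < M" "\<forall>y<p. b y < N"
    and p: "1 \<le> p" "p \<le> 3"
    and E: "image_mset (\<lambda>y. ((c + a y) mod M, b y mod N)) (mset_set {..<p})
   + image_mset (\<lambda>y. ((d + a y) mod M, b (Suc y mod p) mod N)) (mset_set {..<p})
   = image_mset (\<lambda>y. ((c + a y) mod M, b (Suc y mod p) mod N)) (mset_set {..<p})
   + image_mset (\<lambda>y. ((d + a y) mod M, b y mod N)) (mset_set {..<p})"
  shows "mcond p a b"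
proof -
  have uv: "(c + a y) mod M \<noteq> (d + a y') mod M" if "a y = a y'" for y y'
  proof
    assume "(c + a y) mod M = (d + a y') mod M"
    then have "[c + a y = d + a y] (mod M)" using that by (simp add: cong_def)
    then have "[c = d] (mod M)" by (simp add: cong_add_rcancel_nat)
    then show False using cd by (simp add: cong_def)
  qed
  have uu: "a y = a y'" if "(c + a y) mod M = (c + a y') mod M" "y < p" "y' < p" for y y'
  proof -
    have "[c + a y = c + a y'] (mod M)" using that by (simp add: cong_def)
    then have "[a y = a y'] (mod M)" by (simp add: cong_add_lcancel_nat)
    then show ?thesis using ab that by (simp add: cong_def)
  qed
  have bm: "b y mod N = b y" if "y < p" for y using ab that by simp
  consider "p = 1" | "p = 2" | "p = 3" using p by linarith
  then show ?thesis
  proof cases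
    case 1
    have S: "{..<p} = {0}" using 1 by auto
    then show ?thesis using 1 by (simp add: mcond_def)
  next
    case 2
    have S: "{..<(2::nat)} = {0, 1}" by auto
    have E2: "{#((c + a 0) mod M, b 0),((c + a 1) mod M, b 1),((d + a 0) mod M, b 1),((d + a 1) mod M, b 0)#}
       = {#((c + a 0) mod M, b 1),((c + a 1) mod M, b 0),((d + a 0) mod M, b 0),((d + a 1) mod M, b 1)#}"
      using E[unfolded 2 S] 2 bm[of 0] bm[of 1] by (simp add: S add_mset_commute)
    have "{#(a 0, b 0), (a 1, b 1)#} = {#(a 0, b 1), (a 1, b 0)#}"
      by (rule abs2[OF E2]) (use uv uu 2 in auto)
    then show ?thesis unfolding 2 by (simp add: mcond_def S add_mset_commute)
  next
    case 3
    have S: "{..<(3::nat)} = {0, 1, 2}" by auto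
    have E3: "{#((c + a 0) mod M, b 0),((c + a 1) mod M, b 1),((c + a 2) mod M, b 2),((d + a 0) mod M, b 1),((d + a 1) mod M, b 2),((d + a 2) mod M, b 0)#}
       = {#((c + a 0) mod M, b 1),((c + a 1) mod M, b 2),((c + a 2) mod M, b 0),((d + a 0) mod M, b 0),((d + a 1) mod M, b 1),((d + a 2) mod M, b 2)#}"
      using E[unfolded 3 S] 3 bm[of 0] bm[of 1] bm[of 2] by (simp add: S add_mset_commute numeral_2_eq_2)
    have "{#(a 0, b 0), (a 1, b 1), (a 2, b 2)#} = {#(a 0, b 1), (a 1, b 2), (a 2, b 0)#}"
      by (rule abs3[OF E3]) (use uv uu 3 in auto)
    then show ?thesis unfolding 3 by (simp add: mcond_def S add_mset_commute numeral_2_eq_2)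
  qed
qed



lemma part1:
  assumes "r \<ge> 1" "const_tuple r i \<or> mcond p a b" "x < r"
  shows "cond_E M N p r i a b x"
  using assms(2)
proof
  assume c: "const_tuple r i"
  have "i (Suc x mod r) = i x" using c assms(1,3) unfolding const_tuple_def
    by (meson less_le_trans mod_less_divisor zero_less_one)
  then show ?thesis unfolding cond_E_def by (simp add: add.commute)
next
  assume m: "mcond p a b"
  let ?f = "\<lambda>c (\<alpha>::nat, \<beta>::nat). ((c + \<alpha>) mod M, \<beta> mod N)"
  have e: "image_mset (?f c) (image_mset (\<lambda>y. (a y, b y)) (mset_set {..<p}))
    = image_mset (?f c) (image_mset (\<lambda>y. (a y, b (Suc y mod p))) (mset_set {..<p}))" for c
    using m unfolding mcond_def by simp
  have e': "image_mset (\<lambda>y. ((c + a y) mod M, b y mod N)) (mset_set {..<p})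
     = image_mset (\<lambda>y. ((c + a y) mod M, b (Suc y mod p) mod N)) (mset_set {..<p})" for c
    using e[of c] by (simp add: multiset.map_comp o_def)
  show ?thesis unfolding cond_E_def using e'[of "i x"] e'[of "i (Suc x mod r)"] by simp
qed

lemma const_if:
  assumes "\<forall>x<r. i x = i (Suc x mod r)"
  shows "const_tuple r i"
proof -
  have "\<forall>x<r. i x = i 0"
  proof (intro allI impI)
    fix x assume "x < r" then show "i x = i 0"
    proof (induction x)
      case (Suc x)
      have x: "x < r" using Suc.prems by simp
      have e1: "i x = i (Suc x mod r)" using assms[rule_format, OF x] .
      have e2: "Suc x mod r = Suc x" using Suc.prems by simp
      have e3: "i x = i 0" using Suc.IH[OF x] .
      show ?case using e1 e2 e3 by metis
    qed simp
  qed
  then show ?thesis unfolding const_tuple_def by metis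
qed
lemma const_card:
  assumes "r \<ge> 1"
  shows "card {i \<in> tuples M r. const_tuple r i} = M"
proof -
  have "{i \<in> tuples M r. const_tuple r i} = (\<lambda>c j. if j < r then c else 0) ` {..<M}"
  proof
    show "{i \<in> tuples M r. const_tuple r i} \<subseteq> (\<lambda>c j. if j < r then c else 0) ` {..<M}"
    proof
      fix i assume i: "i \<in> {i \<in> tuples M r. const_tuple r i}"
      have c: "i j = i 0" if "j < r" for j
      proof -
        have all: "\<forall>x<r. \<forall>x'<r. i x = i x'" using i unfolding const_tuple_def by blast
        have r0: "0 < r" using assms by simp
        show ?thesis using all[rule_format, OF that r0] .
      qed
      have z: "i j = 0" if "\<not> j < r" for j
        using i that unfolding tuples_def by auto
      have "i = (\<lambda>j. if j < r then i 0 else 0)"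
      proof
        fix j show "i j = (if j < r then i 0 else 0)"
        proof (cases "j < r")
          case True then show ?thesis using c[OF True] by (simp only: if_True)
        next
          case False then show ?thesis using z[OF False] by (simp only: if_False)
        qed
      qed
      moreover have "i 0 < M" using i assms unfolding tuples_def by auto
      ultimately show "i \<in> (\<lambda>c j. if j < r then c else 0) ` {..<M}" by blast
    qed
  next
    show "(\<lambda>c j. if j < r then c else 0) ` {..<M} \<subseteq> {i \<in> tuples M r. const_tuple r i}"
      by (auto simp: tuples_def const_tuple_def)
  qed
  moreover have "inj_on (\<lambda>c j. if j < r then c else 0) {..<M}"
  proof
    fix c c' assume "(\<lambda>j. if j < r then c else 0) = (\<lambda>j. if j < r then c' else (0::nat))"
    then have h: "(\<lambda>j. if j < r then c else 0) 0 = (\<lambda>j. if j < r then c' else (0::nat)) 0" by (rule fun_cong)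
    have "0 < r" using assms by simp
    with h show "c = c'" by simp
  qed
  ultimately show ?thesis by (simp add: card_image)
qed

theorem theorem3p5:
  fixes M N p r :: nat
  assumes "M \<ge> 1" "N \<ge> 1" "p \<ge> 1" "r \<ge> 1"
  shows "(\<forall>(i, a, b) \<in> triples M N p r. (const_tuple r i \<or> mcond p a b)
             \<longrightarrow> (\<forall>x<r. cond_E M N p r i a b x))
       \<and> beta_pr p r M N = delta_p p M N + (1 - delta_p p M N) / real M ^ (r - 1)
       \<and> ((M = 1 \<or> N = 1 \<or> r = 1 \<or> p \<le> 3) \<longrightarrow> beta_pr p r M N = d_pr p r M N)"
proof (intro conjI)
  show P1: "\<forall>(i, a, b) \<in> triples M N p r. (const_tuple r i \<or> mcond p a b)
             \<longrightarrow> (\<forall>x<r. cond_E M N p r i a b x)"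
    by (auto intro: part1[OF assms(4)])
  define T where "T = tuples M p \<times> tuples N p"
  define C where "C = {i \<in> tuples M r. const_tuple r i}"
  define D where "D = {(a, b) \<in> tuples M p \<times> tuples N p. mcond p a b}"
  have fT: "finite T" and cT: "card T = M^p * N^p"
    using tuples_card[of M p] tuples_card[of N p] by (auto simp: T_def card_cartesian_product)
  have fR: "finite (tuples M r)" and cR: "card (tuples M r) = M ^ r" using tuples_card by auto
  have cC: "card C = M" using const_card[OF assms(4)] by (simp add: C_def)
  have CR: "C \<subseteq> tuples M r" by (auto simp: C_def)
  have DT: "D \<subseteq> T" by (auto simp: D_def T_def)
  have fC: "finite C" using CR fR finite_subset by blast
  have fD: "finite D" using DT fT finite_subset by blast
  have Seq: "{(i, a, b) \<in> triples M N p r. const_tuple r i \<or> mcond p a b}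
     = (C \<times> T) \<union> (tuples M r \<times> D)"
    by (auto simp: triples_def C_def D_def T_def)
  have Ieq: "(C \<times> T) \<inter> (tuples M r \<times> D) = C \<times> D" using CR DT by auto
  have "card ((C \<times> T) \<union> (tuples M r \<times> D)) + card (C \<times> D) = card (C \<times> T) + card (tuples M r \<times> D)"
    using card_Un_Int[of "C \<times> T" "tuples M r \<times> D"] fC fT fR fD Ieq by auto
  have "real (card ((C \<times> T) \<union> (tuples M r \<times> D))) = real M * (real M^p * real N^p) + real M^r * card D - real M * card D"
  proof -
    have "real (card ((C \<times> T) \<union> (tuples M r \<times> D))) + real (card (C \<times> D)) = real (card (C \<times> T)) + real (card (tuples M r \<times> D))"
      using \<open>card ((C \<times> T) \<union> (tuples M r \<times> D)) + card (C \<times> D) = card (C \<times> T) + card (tuples M r \<times> D)\<close>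
      by (metis of_nat_add)
    then show ?thesis by (simp add: card_cartesian_product cC cT cR algebra_simps)
  qed
  then have B: "beta_pr p r M N = (real M * (real M^p * real N^p) + real M^r * card D - real M * card D) / (real M ^ (p + r) * real N ^ p)"
    unfolding beta_pr_def Seq by simp
  have De: "delta_p p M N = card D / (real M * real N) ^ p" unfolding delta_p_def D_def by simp
  obtain r' where r': "r = Suc r'" using assms(4) by (cases r) auto
  have M0: "real M > 0" "real N > 0" using assms by auto
  show "beta_pr p r M N = delta_p p M N + (1 - delta_p p M N) / real M ^ (r - 1)"
    unfolding B De unfolding r' using M0 by (simp add: field_simps power_add power_mult_distrib)
  show "(M = 1 \<or> N = 1 \<or> r = 1 \<or> p \<le> 3) \<longrightarrow> beta_pr p r M N = d_pr p r M N"
  proof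
    assume H: "M = 1 \<or> N = 1 \<or> r = 1 \<or> p \<le> 3"
    have "{(i, a, b) \<in> triples M N p r. \<forall>x<r. cond_E M N p r i a b x}
        = {(i, a, b) \<in> triples M N p r. const_tuple r i \<or> mcond p a b}"
    proof -
      have key2: "(\<forall>x<r. cond_E M N p r i a b x) = (const_tuple r i \<or> mcond p a b)"
        if tr: "(i, a, b) \<in> triples M N p r" for i a b
      proof -
      have ti: "\<forall>j<r. i j < M" and ta: "\<forall>j<p. a j < M" and tb: "\<forall>j<p. b j < N"
        and tb0: "\<forall>j. p \<le> j \<longrightarrow> b j = 0"
        using tr by (auto simp: triples_def tuples_def)
      have "const_tuple r i \<or> mcond p a b" if E: "\<forall>x<r. cond_E M N p r i a b x"
      proof -
        consider "M = 1" | "N = 1" | "r = 1" | "p \<le> 3" using H by blast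
        then show ?thesis
        proof cases
          case 1 then show ?thesis using ti by (auto simp: const_tuple_def)
        next
          case 2
          then have "b = (\<lambda>_. 0)" using tb tb0 by (metis less_one not_le)
          then show ?thesis by (simp add: mcond_def)
        next
          case 3 then show ?thesis by (auto simp: const_tuple_def)
        next
          case 4
          show ?thesis
          proof (cases "const_tuple r i")
            case False
            then obtain x where x: "x < r" "i x \<noteq> i (Suc x mod r)" using const_if by blast
            have "Suc x mod r < r" using assms(4) by simp
            have Ex: "cond_E M N p r i a b x" using E x(1) by blast
            have "mcond p a b"
              by (rule key[OF _ _ x(2) ta tb assms(3) 4 Ex[unfolded cond_E_def]])
                 (use ti x(1) \<open>Suc x mod r < r\<close> in blast)+
            then show ?thesis by simp
          qed simp
        qed
      qed
      then show ?thesis using tr P1 by auto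
    qed
    show ?thesis using key2 by auto
    qed
    then show "beta_pr p r M N = d_pr p r M N" unfolding beta_pr_def d_pr_def by simp
  qed
qed

end
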